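(* Let $G$ be a graph on $p$ vertices, $q\ge 2^{p-1}p^2$ an integer and $c=4q+2$. Suppose $\Psi$ is a proper $c$-colouring of $K_c^{G[K_q]}$ with colours $[c]$ such that $\Psi(\phi)\in\mathrm{Im}(\phi)$ for every simple map $\phi$. For $v\in V(G)$ and $b\in[c]$ let $I(v,b)=\{\phi \text{ simple}: \Psi(\phi)=b=\phi(v)\}$, and call $I(v,b)$ large if $|I(v,b)|\ge 2pc^{p-2}$. Then there is a vertex $v\in V(G)$ such that $|\{b\in[c]: I(v,b)\text{ is large}\}|>c/2$.
   Context: $[c]=\{1,\dots,c\}$. $G[K_q]$ has vertex set $V(G)\times[q]$, with $(x,i)\sim(y,j)$ iff $xy\in E(G)$, or $x=y$ and $i\ne j$. $K_c^{F}$ has as vertices all maps $V(F)\to[c]$, with $f\sim g$ iff $f(x)\ne g(y)$ and $f(y)\ne g(x)$ for every edge $xy$ of $F$. $\mathrm{Im}(f)$ is the image of $f$. A map $\phi\in V(K_c^{G[K_q]})$ is simple if $\phi(x,i)=\phi(x,j)$ for all $x\in V(G)$, $i,j\in[q]$; for simple $\phi$ write $\phi(x)$ for this common value. There are exactly $c^p$ simple maps. *)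

theory Defs
  imports "HOL-Library.FuncSet" Complex_Main
begin

definition simple_graph :: "'a set \<Rightarrow> ('a \<Rightarrow> 'a \<Rightarrow> bool) \<Rightarrow> bool" where
  "simple_graph V E \<longleftrightarrow> finite V \<and> (\<forall>x y. E x y \<longrightarrow> x \<in> V \<and> y \<in> V \<and> x \<noteq> y \<and> E y x)"

definition lex_verts :: "'a set \<Rightarrow> nat \<Rightarrow> ('a \<times> nat) set" where
  "lex_verts V q = V \<times> {1..q}"

definition lex_adj :: "'a set \<Rightarrow> ('a \<Rightarrow> 'a \<Rightarrow> bool) \<Rightarrow> nat \<Rightarrow> ('a \<times> nat) \<Rightarrow> ('a \<times> nat) \<Rightarrow> bool" where
  "lex_adj V E q u w \<longleftrightarrow> u \<in> lex_verts V q \<and> w \<in> lex_verts V q \<and>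
     (E (fst u) (fst w) \<or> (fst u = fst w \<and> snd u \<noteq> snd w))"

definition exp_verts :: "'b set \<Rightarrow> nat \<Rightarrow> ('b \<Rightarrow> nat) set" where
  "exp_verts W c = W \<rightarrow>\<^sub>E {1..c}"

definition exp_adj :: "('b \<Rightarrow> 'b \<Rightarrow> bool) \<Rightarrow> ('b \<Rightarrow> nat) \<Rightarrow> ('b \<Rightarrow> nat) \<Rightarrow> bool" where
  "exp_adj F f g \<longleftrightarrow> (\<forall>x y. F x y \<longrightarrow> f x \<noteq> g y \<and> f y \<noteq> g x)"

definition proper_colouring :: "'v set \<Rightarrow> ('v \<Rightarrow> 'v \<Rightarrow> bool) \<Rightarrow> nat \<Rightarrow> ('v \<Rightarrow> nat) \<Rightarrow> bool" where
  "proper_colouring X R c \<Psi> \<longleftrightarrow> (\<forall>f\<in>X. \<Psi> f \<in> {1..c}) \<and> (\<forall>f\<in>X. \<forall>g\<in>X. R f g \<longrightarrow> \<Psi> f \<noteq> \<Psi> g)"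

definition simple_map :: "'a set \<Rightarrow> nat \<Rightarrow> ('a \<times> nat \<Rightarrow> nat) \<Rightarrow> bool" where
  "simple_map V q \<phi> \<longleftrightarrow> (\<forall>x\<in>V. \<forall>i\<in>{1..q}. \<forall>j\<in>{1..q}. \<phi> (x, i) = \<phi> (x, j))"

definition simple_maps :: "'a set \<Rightarrow> nat \<Rightarrow> nat \<Rightarrow> ('a \<times> nat \<Rightarrow> nat) set" where
  "simple_maps V q c = {\<phi> \<in> exp_verts (lex_verts V q) c. simple_map V q \<phi>}"

text \<open>I(v,b) = { \<phi> simple : \<Psi>(\<phi>) = b = \<phi>(v) }, where \<phi>(v) = \<phi>(v,1).\<close>
definition I_set :: "'a set \<Rightarrow> nat \<Rightarrow> nat \<Rightarrow> (('a \<times> nat \<Rightarrow> nat) \<Rightarrow> nat) \<Rightarrow> 'a \<Rightarrow> nat \<Rightarrow> ('a \<times> nat \<Rightarrow> nat) set" where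
  "I_set V q c \<Psi> v b = {\<phi> \<in> simple_maps V q c. \<Psi> \<phi> = b \<and> \<phi> (v, 1) = b}"

end

theory Submission
  imports Defs
begin

lemma powi_aux:
  assumes "p \<ge> 1" "(x::real) > 0"
  shows "x * x powi (int p - 2) = x ^ (p - 1)"
proof -
  have a: "x powi (1 + (int p - 2)) = x powi 1 * x powi (int p - 2)"
    using assms by (intro power_int_add) simp
  have b: "1 + (int p - 2) = int (p - 1)" using assms by linarith
  have c: "x powi int (p - 1) = x ^ (p - 1)" by (rule power_int_of_nat)
  show ?thesis using a b c by (metis power_int_1_right)
qed

theorem lemma3:
  fixes V :: "'a set" and E :: "'a \<Rightarrow> 'a \<Rightarrow> bool" and p q c :: nat
    and \<Psi> :: "('a \<times> nat \<Rightarrow> nat) \<Rightarrow> nat"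
  assumes G: "simple_graph V E"
    and p: "card V = p"
    and q: "q \<ge> 2 ^ (p - 1) * p ^ 2"
    and c: "c = 4 * q + 2"
    and col: "proper_colouring (exp_verts (lex_verts V q) c) (exp_adj (lex_adj V E q)) c \<Psi>"
    and im: "\<forall>\<phi>\<in>simple_maps V q c. \<Psi> \<phi> \<in> \<phi> ` lex_verts V q"
  shows "\<exists>v\<in>V. real (card {b\<in>{1..c}.
            real (card (I_set V q c \<Psi> v b)) \<ge> 2 * real p * real c powi (int p - 2)})
          > real c / 2"
proof (rule ccontr)
  define thr where "thr = 2 * real p * real c powi (int p - 2)"
  define L where "L v = {b\<in>{1..c}. real (card (I_set V q c \<Psi> v b)) \<ge> thr}" for v
  define S where "S v = {1..c} - L v" for v
  define m where "m = 2 * q + 1"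
  have cm: "c = 2 * m" using c m_def by simp
  assume "\<not> ?thesis"
  then have Lle: "\<forall>v\<in>V. real (card (L v)) \<le> real c / 2" unfolding L_def thr_def by auto
  have fin: "finite V" using G simple_graph_def by auto
  have Vne: "V \<noteq> {}"
  proof
    assume "V = {}"
    define \<phi>0 where "\<phi>0 = (\<lambda>_::'a\<times>nat. undefined::nat)"
    have "\<phi>0 \<in> simple_maps V q c" using \<open>V = {}\<close>
      by (simp add: simple_maps_def exp_verts_def lex_verts_def simple_map_def \<phi>0_def)
    with im \<open>V = {}\<close> show False by (simp add: lex_verts_def)
  qed
  then have "card V > 0" using fin by (simp add: card_gt_0_iff)
  then have p1: "p \<ge> 1" using p by simp
  have Sge: "card (S v) \<ge> m" if "v \<in> V" for v
  proof -
    have "L v \<subseteq> {1..c}" unfolding L_def by auto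
    then have "card (S v) = c - card (L v)" unfolding S_def by (simp add: card_Diff_subset finite_subset)
    moreover have "card (L v) \<le> m" using Lle that cm by auto
    ultimately show ?thesis using cm by simp
  qed
  define P where "P = {\<phi> \<in> simple_maps V q c. \<forall>x\<in>V. \<phi> (x, 1) \<in> S x}"
  have finE: "finite (exp_verts (lex_verts V q) c)"
    unfolding exp_verts_def lex_verts_def using fin by (intro finite_PiE) auto
  have finI: "finite (I_set V q c \<Psi> v b)" for v b
    by (rule finite_subset[OF _ finE]) (auto simp: I_set_def simple_maps_def)
  have finP: "finite P"
    by (rule finite_subset[OF _ finE]) (auto simp: P_def simple_maps_def)
  define emb where "emb g = (\<lambda>(x::'a, i::nat). if x \<in> V \<and> i \<in> {1..q} then g x else undefined)" for g :: "'a \<Rightarrow> nat"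
  have q1: "q \<ge> 1"
  proof -
    have "(1::nat) \<le> 2 ^ (p - 1) * p ^ 2" using p1 by simp
    then show ?thesis using q by linarith
  qed
  have embP: "emb ` (PiE V S) \<subseteq> P"
  proof
    fix f assume "f \<in> emb ` PiE V S"
    then obtain g where g: "g \<in> PiE V S" and f: "f = emb g" by auto
    have "\<forall>x\<in>V. g x \<in> {1..c}" using g unfolding S_def by auto
    then show "f \<in> P" using g q1 unfolding P_def simple_maps_def exp_verts_def lex_verts_def simple_map_def f emb_def
      by (auto simp: PiE_def Pi_def extensional_def)
  qed
  have embinj: "inj_on emb (PiE V S)"
  proof
    fix g h assume g: "g \<in> PiE V S" and h: "h \<in> PiE V S" and eq: "emb g = emb h"
    show "g = h"
    proof
      fix x show "g x = h x"
      proof (cases "x \<in> V")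
        case True
        have "emb g (x, 1) = emb h (x, 1)" using eq by simp
        then show ?thesis using True q1 by (simp add: emb_def)
      next
        case False then show ?thesis using g h by (auto simp: PiE_def extensional_def)
      qed
    qed
  qed
  have "card (PiE V S) \<le> card P"
    using card_inj_on_le[OF embinj embP finP] .
  moreover have "card (PiE V S) = (\<Prod>v\<in>V. card (S v))" using fin by (rule card_PiE)
  moreover have "(\<Prod>v\<in>V. card (S v)) \<ge> (\<Prod>v\<in>V. m)" by (rule prod_mono) (use Sge in auto)
  ultimately have low: "m ^ p \<le> card P" using p by simp
  have cover: "P \<subseteq> (\<Union>v\<in>V. \<Union>b\<in>S v. I_set V q c \<Psi> v b)"
  proof
    fix \<phi> assume ph: "\<phi> \<in> P"
    then have sm: "\<phi> \<in> simple_maps V q c" unfolding P_def by auto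
    have "\<Psi> \<phi> \<in> \<phi> ` lex_verts V q" using im sm by blast
    then obtain xi where xi0: "xi \<in> V \<times> {1..q}" "\<Psi> \<phi> = \<phi> xi" unfolding lex_verts_def by blast
    obtain x i where xi: "x \<in> V" "i \<in> {1..q}" "\<Psi> \<phi> = \<phi> (x, i)"
      using xi0 by (cases xi) blast
    have "simple_map V q \<phi>" using sm unfolding simple_maps_def by blast
    moreover have "(1::nat) \<in> {1..q}" using q1 by simp
    ultimately have "\<phi> (x, i) = \<phi> (x, 1)" using xi(1,2) unfolding simple_map_def by blast
    then have b: "\<Psi> \<phi> = \<phi> (x, 1)" using xi by simp
    have Sx: "\<phi> (x, 1) \<in> S x" using ph xi unfolding P_def by blast
    have "\<phi> \<in> I_set V q c \<Psi> x (\<phi> (x, 1))" unfolding I_set_def using sm b by blast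
    then show "\<phi> \<in> (\<Union>v\<in>V. \<Union>b\<in>S v. I_set V q c \<Psi> v b)"
      using xi(1) Sx by blast
  qed
  have finS: "finite (S v)" for v unfolding S_def by auto
  have "card P \<le> card (\<Union>v\<in>V. \<Union>b\<in>S v. I_set V q c \<Psi> v b)"
    by (rule card_mono[OF _ cover]) (intro finite_UN_I fin finS finI)
  also have "\<dots> \<le> (\<Sum>v\<in>V. card (\<Union>b\<in>S v. I_set V q c \<Psi> v b))" by (rule card_UN_le[OF fin])
  also have "\<dots> \<le> (\<Sum>v\<in>V. \<Sum>b\<in>S v. card (I_set V q c \<Psi> v b))"
    by (rule sum_mono, rule card_UN_le[OF finS])
  finally have up0: "card P \<le> (\<Sum>v\<in>V. \<Sum>b\<in>S v. card (I_set V q c \<Psi> v b))" .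
  then have up1: "real (card P) \<le> (\<Sum>v\<in>V. \<Sum>b\<in>S v. real (card (I_set V q c \<Psi> v b)))"
    unfolding of_nat_sum[symmetric] of_nat_le_iff .
  have thr0: "thr \<ge> 0" unfolding thr_def by simp
  have "(\<Sum>v\<in>V. \<Sum>b\<in>S v. real (card (I_set V q c \<Psi> v b))) \<le> (\<Sum>v\<in>V. \<Sum>b\<in>S v. thr)"
    by (intro sum_mono) (auto simp: S_def L_def)
  also have "\<dots> \<le> (\<Sum>v\<in>V. real c * thr)"
  proof (rule sum_mono)
    fix v have "card (S v) \<le> card {1..c}" unfolding S_def by (rule card_mono) auto
    then have "card (S v) \<le> c" by simp
    then show "(\<Sum>b\<in>S v. thr) \<le> real c * thr" using thr0 by (simp add: mult_right_mono)
  qed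
  also have "\<dots> = real p * real c * thr" using p by simp
  finally have up: "real (m ^ p) \<le> real p * real c * thr" using up1 low
    by (meson of_nat_le_iff order_trans)
  have cpos: "real c > 0" using c by simp
  have e: "real c * real c powi (int p - 2) = real c ^ (p - 1)" by (rule powi_aux[OF p1 cpos])
  have "real c * thr = 2 * real p * (real c * real c powi (int p - 2))"
    unfolding thr_def by (simp only: mult.assoc mult.left_commute)
  then have ct: "real c * thr = 2 * real p * real c ^ (p - 1)" using e by simp
  have "real p * real c * thr = real p * (real c * thr)" by (simp only: mult.assoc)
  also have "\<dots> = 2 * real p ^ 2 * real c ^ (p - 1)" unfolding ct by (simp add: power2_eq_square)
  finally have "real (m ^ p) \<le> 2 * real p ^ 2 * real c ^ (p - 1)" using up by linarith
  also have "2 * real p ^ 2 * real c ^ (p - 1) = real (2 * p ^ 2 * c ^ (p - 1))" by simp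
  finally have nat1: "m ^ p \<le> 2 * p ^ 2 * c ^ (p - 1)" by (simp only: of_nat_le_iff)
  have "c ^ (p - 1) = 2 ^ (p - 1) * m ^ (p - 1)" using cm by (simp add: power_mult_distrib)
  moreover have "m ^ p = m * m ^ (p - 1)" using p1 by (cases p) simp_all
  ultimately have "m * m ^ (p - 1) \<le> (2 * p ^ 2 * 2 ^ (p - 1)) * m ^ (p - 1)" using nat1 by (simp add: algebra_simps)
  moreover have "m ^ (p - 1) > 0" using m_def by simp
  ultimately have "m \<le> 2 * p ^ 2 * 2 ^ (p - 1)" by (meson mult_le_cancel2 not_gr0)
  moreover have "2 * p ^ 2 * 2 ^ (p - 1) \<le> 2 * q" using q by (simp add: mult.commute)
  ultimately show False using m_def by simp
qed

end
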